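(* Let $f(x)$ be a real polynomial of degree $K > 1$ with positive leading coefficient, such that all roots of $f'(x)$ are real. Let $k$ be the number of distinct roots of $f'(x)$ that are not inflection points of $f(x)$, and if $k > 0$ sort them as $\alpha_k < \cdots < \alpha_1$; set $\alpha_0 = +\infty$, $f(\alpha_0) = 1$, $\alpha_{k+1} = -\infty$, $f(\alpha_{k+1}) = (-1)^K$. Then: (I) if $k > 0$, then for $i = 1,\ldots,k$, $\alpha_i$ is a local minimum of $f$ if $i$ is odd and a local maximum of $f$ if $i$ is even; (II) $k$ and $K$ have opposite parity; (III) for each $i = 1,\ldots,k+1$, $f$ is monotone on $(\alpha_i,\alpha_{i-1})$; (IV) for $i = 1,\ldots,k+1$: if $f(\alpha_i)f(\alpha_{i-1}) \geq 0$ then $f$ has no root in $(\alpha_i,\alpha_{i-1})$; if $f(\alpha_i)f(\alpha_{i-1}) < 0$ then $f$ has a unique root in $(\alpha_i,\alpha_{i-1})$, which is either simple or an inflection point of $f$; (V) if every root $\beta$ of $f'$ with $\mathrm{ord}_\beta(f'(x)) > 1$ is also a root of $f$, then for each $i = 1,\ldots,k+1$ with $f(\alpha_i)f(\alpha_{i-1}) \geq 0$, $f'$ has no root in $(\alpha_i,\alpha_{i-1})$; (VI) $f$ has only real roots if and only if $S(-\infty,+\infty) = 1$, where for $x_1 < x_2$ in $\mathbb{R}\cup\{\pm\infty\}$, $S(x_1,x_2) = \sum_{r \in [x_1,x_2)\cap\mathbb{R}} \left(\mathrm{ord}_r(f(x)) - \mathrm{ord}_r(f'(x))\right)$.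
   Context: $\mathrm{ord}_\gamma(f(x))$ denotes the order of vanishing of $f$ at $\gamma$ (zero if $\gamma$ is not a root); only finitely many terms in $S(x_1,x_2)$ are nonzero. *)

theory Defs
  imports "HOL-Analysis.Analysis" "HOL-Computational_Algebra.Polynomial" "HOL-Library.Extended_Real"
begin

definition inflection_point :: "real poly \<Rightarrow> real \<Rightarrow> bool" where
  "inflection_point f x \<longleftrightarrow>
     (\<exists>e>0. \<forall>t s. x - e < t \<and> t < x \<and> x < s \<and> s < x + e \<longrightarrow>
        poly (pderiv (pderiv f)) t * poly (pderiv (pderiv f)) s < 0)"

definition local_min :: "real poly \<Rightarrow> real \<Rightarrow> bool" where
  "local_min f x \<longleftrightarrow> (\<exists>e>0. \<forall>y. \<bar>y - x\<bar> < e \<longrightarrow> poly f x \<le> poly f y)"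

definition local_max :: "real poly \<Rightarrow> real \<Rightarrow> bool" where
  "local_max f x \<longleftrightarrow> (\<exists>e>0. \<forall>y. \<bar>y - x\<bar> < e \<longrightarrow> poly f y \<le> poly f x)"

definition crit_pts :: "real poly \<Rightarrow> real set" where
  "crit_pts f = {x. poly (pderiv f) x = 0 \<and> \<not> inflection_point f x}"

text \<open>alpha_k < ... < alpha_1 (for 1 \<le> i \<le> k), alpha_0 = +inf, alpha_(k+1) = -inf.\<close>
definition alpha :: "real poly \<Rightarrow> nat \<Rightarrow> ereal" where
  "alpha f i = (if i = 0 then PInfty
     else if i \<le> card (crit_pts f)
       then ereal (sorted_list_of_set (crit_pts f) ! (card (crit_pts f) - i))
     else MInfty)"

definition falpha :: "real poly \<Rightarrow> nat \<Rightarrow> real" where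
  "falpha f i = (if i = 0 then 1
     else if i \<le> card (crit_pts f) then poly f (real_of_ereal (alpha f i))
     else (-1) ^ degree f)"

definition alpha_int :: "real poly \<Rightarrow> nat \<Rightarrow> real set" where
  "alpha_int f i = {x. alpha f i < ereal x \<and> ereal x < alpha f (i - 1)}"

text \<open>S(x1,x2) = sum over real r in [x1,x2) of ord_r f - ord_r f' (only roots contribute).\<close>
definition S_sum :: "real poly \<Rightarrow> ereal \<Rightarrow> ereal \<Rightarrow> int" where
  "S_sum f x1 x2 = (\<Sum>r\<in>{r. x1 \<le> ereal r \<and> ereal r < x2 \<and>
        (poly f r = 0 \<or> poly (pderiv f) r = 0)}.
      int (order r f) - int (order r (pderiv f)))"

end

theory Submission imports Defs "HOL-Computational_Algebra.Fundamental_Theorem_Algebra" begin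

lemma map_poly_of_real_mult:
  "map_poly (of_real :: real \<Rightarrow> complex) (a * b) = map_poly of_real a * map_poly of_real b"
  by (rule poly_eqI) (simp add: coeff_map_poly coeff_mult of_real_sum)

lemma poly_map_of_real_real: "poly (map_poly (of_real :: real \<Rightarrow> complex) p) (of_real x) = of_real (poly p x)"
  by (induction p) (auto simp: map_poly_pCons)

lemma poly_map_prod_linear:
  "poly (map_poly (of_real :: real \<Rightarrow> complex) (\<Prod>x\<in>#M. [:-x,1:])) z = (\<Prod>x\<in>#M. (z - of_real x))"
proof (induction M)
  case (add x M)
  have "poly (map_poly (of_real :: real \<Rightarrow> complex) [:-x,1:]) z = z - of_real x"
    by (simp add: map_poly_pCons)
  then show ?case using add
    by (simp only: image_mset_add_mset prod_mset.add_mset map_poly_of_real_mult poly_mult) 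
qed simp

lemma prod_linear_nz: "(\<Prod>x\<in>#M. [:-x,1::real:]) \<noteq> 0"
  by (auto simp: prod_mset_zero_iff)

lemma degree_prod_linear: "degree (\<Prod>x\<in>#M. [:-x,1::real:]) = size M"
proof (induction M)
  case (add x M)
  then show ?case using prod_linear_nz[of M]
    by (simp only: image_mset_add_mset prod_mset.add_mset, subst degree_mult_eq, auto)
qed simp

lemma lc_prod_linear: "lead_coeff (\<Prod>x\<in>#M. [:-x,1::real:]) = 1"
proof (induction M)
  case (add x M)
  then show ?case
    by (simp only: image_mset_add_mset prod_mset.add_mset lead_coeff_mult, simp)
qed simp

lemma decomp:
  fixes p :: "real poly"
  assumes "p \<noteq> 0"
  shows "\<exists>q. p = (\<Prod>x\<in>#proots p. [:-x,1:]) * q \<and> (\<forall>x. poly q x \<noteq> 0)"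
  using assms
proof (induction p rule: poly_root_order_induct)
  case (no_roots p)
  hence "proots p = {#}" by (simp add: multiset_eqI order_root)
  then show ?case using no_roots by auto
next
  case (root p x n)
  then have p0: "p \<noteq> 0" by auto
  then obtain q where q: "p = (\<Prod>x\<in>#proots p. [:-x,1:]) * q" "\<forall>x. poly q x \<noteq> 0"
    using root by auto
  have pr: "proots [:-x,1:] = {#x#}" using proots_linear_factor[of "-x"] by simp
  have "proots ([:-x,1:]^n * p) = replicate_mset n x + proots p"
    using p0 by (simp add: proots_mult proots_power pr)
  moreover have "(\<Prod>y\<in>#replicate_mset n x. [:-y,1:]) = [:-x,1:]^n"
    by (induction n) auto
  ultimately show ?case using q by (intro exI[of _ q]) (simp add: mult.assoc)
qed simp

lemma allreal_iff:
  fixes p q :: "real poly"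
  assumes pq: "p = (\<Prod>x\<in>#M. [:-x,1:]) * q" and nr: "\<forall>x. poly q x \<noteq> 0"
  shows "(\<forall>z::complex. poly (map_poly of_real p) z = 0 \<longrightarrow> z \<in> \<real>) \<longleftrightarrow> degree q = 0"
proof
  assume H: "\<forall>z::complex. poly (map_poly of_real p) z = 0 \<longrightarrow> z \<in> \<real>"
  show "degree q = 0"
  proof (rule ccontr)
    assume "degree q \<noteq> 0"
    then have "degree (map_poly (of_real :: real \<Rightarrow> complex) q) \<noteq> 0"
      by (subst degree_map_poly) auto
    then have "\<not> constant (poly (map_poly (of_real :: real \<Rightarrow> complex) q))"
      by (simp add: constant_degree)
    then obtain z :: complex where z: "poly (map_poly of_real q) z = 0"
      using fundamental_theorem_of_algebra by blast
    then have "poly (map_poly of_real p) z = 0"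
      by (simp add: pq map_poly_of_real_mult)
    then have "z \<in> \<real>" using H by auto
    then obtain x where "z = of_real x" by (auto elim: Reals_cases)
    then have "of_real (poly q x) = (0::complex)" using z by (simp add: poly_map_of_real_real)
    then show False using nr by simp
  qed
next
  assume "degree q = 0"
  then obtain c where c: "q = [:c:]" by (auto elim: degree_eq_zeroE)
  show "\<forall>z::complex. poly (map_poly of_real p) z = 0 \<longrightarrow> z \<in> \<real>"
  proof (intro allI impI)
    fix z :: complex assume "poly (map_poly of_real p) z = 0"
    moreover have "map_poly (of_real :: real \<Rightarrow> complex) p = map_poly of_real (\<Prod>x\<in>#M. [:-x,1:]) * map_poly of_real [:c:]"
      by (simp only: pq c map_poly_of_real_mult)
    ultimately have "(\<Prod>x\<in>#M. (z - of_real x)) * of_real c = 0"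
      by (simp only: poly_mult poly_map_prod_linear) (simp add: map_poly_pCons)
    moreover have "c \<noteq> 0" using nr c by auto
    ultimately have "(\<Prod>x\<in>#M. (z - of_real x)) = 0" by simp
    then obtain x where "z - of_real x = 0" by (auto simp: prod_mset_zero_iff)
    then show "z \<in> \<real>" by (metis Reals_of_real eq_iff_diff_eq_0)
  qed
qed

lemma sign_prod:
  fixes x :: real
  assumes "x \<notin># M"
  shows "(\<Prod>r\<in>#M. (x - r)) > 0 \<longleftrightarrow> even (size (filter_mset (\<lambda>r. x < r) M))"
    and "(\<Prod>r\<in>#M. (x - r)) \<noteq> 0"
  using assms
proof (induction M)
  case (add a M)
  { case 1
    then have IH: "(\<Prod>r\<in>#M. (x - r)) > 0 \<longleftrightarrow> even (size (filter_mset (\<lambda>r. x < r) M))"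
      and nz: "(\<Prod>r\<in>#M. (x - r)) \<noteq> 0" and xa: "x \<noteq> a" using add by auto
    have eq: "(\<Prod>r\<in>#add_mset a M. (x - r)) = (x - a) * (\<Prod>r\<in>#M. (x - r))" by simp
    have d: "(\<Prod>r\<in>#M. (x - r)) > 0 \<or> (\<Prod>r\<in>#M. (x - r)) < 0" using nz by linarith
    show ?case
    proof (cases "x < a")
      case True
      then show ?thesis unfolding eq using IH d by (auto simp: zero_less_mult_iff)
    next
      case False
      then have "x > a" using xa by auto
      then show ?thesis unfolding eq using IH d False by (auto simp: zero_less_mult_iff)
    qed }
  { case 2 then show ?case using add by auto }
qed auto

lemma parity_filter:
  fixes x :: real
  shows "even (size (filter_mset (\<lambda>r. x < r) M)) \<longleftrightarrow> even (card {r. x < r \<and> odd (count M r)})"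
proof (induction M)
  case empty
  then show ?case by simp
next
  case (add a M)
  have fin: "finite {r. x < r \<and> odd (count M r)}"
    by (rule finite_subset[of _ "set_mset M"]) (auto, metis count_eq_zero_iff even_zero)
  show ?case
  proof (cases "x < a")
    case False
    then have "{r. x < r \<and> odd (count (add_mset a M) r)} = {r. x < r \<and> odd (count M r)}"
      by auto
    then show ?thesis using add False by simp
  next
    case True
    show ?thesis
    proof (cases "odd (count M a)")
      case True
      then have "{r. x < r \<and> odd (count (add_mset a M) r)} = {r. x < r \<and> odd (count M r)} - {a}"
        by auto
      moreover have "a \<in> {r. x < r \<and> odd (count M r)}" using True \<open>x < a\<close> by auto
      ultimately show ?thesis using add \<open>x < a\<close> fin
        by (simp add: card_Diff_singleton) (metis One_nat_def Suc_pred card_gt_0_iff empty_iff even_Suc)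
    next
      case False
      then have "{r. x < r \<and> odd (count (add_mset a M) r)} = insert a {r. x < r \<and> odd (count M r)}"
        using \<open>x < a\<close> by auto
      moreover have "a \<notin> {r. x < r \<and> odd (count M r)}" using False by auto
      ultimately show ?thesis using add \<open>x < a\<close> fin by simp
    qed
  qed
qed

lemma sum_count_superset:
  assumes "finite R" "set_mset M \<subseteq> R"
  shows "(\<Sum>r\<in>R. count M r) = size M"
  using assms(2)
proof (induction M)
  case (add a M)
  have "(\<Sum>r\<in>R. count (add_mset a M) r) = (\<Sum>r\<in>R. count M r + (if r = a then 1 else 0))"
    by (intro sum.cong) auto
  also have "\<dots> = (\<Sum>r\<in>R. count M r) + 1"
    using add assms(1) by (simp add: sum.distrib)
  finally show ?case using add by simp
qed simp

lemma sign_near: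
  fixes h :: "real poly"
  assumes "poly h a \<noteq> 0"
  shows "\<exists>d>0. \<forall>y. \<bar>y - a\<bar> < d \<longrightarrow> poly h y * poly h a > 0"
proof -
  have "continuous (at a) (\<lambda>y. poly h y * poly h a)" by (intro continuous_intros)
  then have "((\<lambda>y. poly h y * poly h a) \<longlongrightarrow> poly h a * poly h a) (at a)"
    by (simp add: continuous_at)
  moreover have "poly h a * poly h a > 0" using assms
    by (metis linorder_neqE_linordered_idom mult_neg_neg mult_pos_pos)
  ultimately have "eventually (\<lambda>y. poly h y * poly h a > 0) (at a)"
    by (rule order_tendstoD(1))
  then obtain d where d: "d > 0" "\<forall>y. y \<noteq> a \<and> dist y a < d \<longrightarrow> poly h y * poly h a > 0"
    unfolding eventually_at by auto
  show ?thesis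
  proof (intro exI[of _ d] conjI allI impI)
    fix y assume "\<bar>y - a\<bar> < d"
    then show "poly h y * poly h a > 0" using d assms
      by (cases "y = a") (auto simp: dist_real_def)
  qed (use d in auto)
qed

lemma local_sign:
  fixes g :: "real poly"
  assumes "g \<noteq> 0"
  shows "(\<exists>e>0. \<forall>t s. a - e < t \<and> t < a \<and> a < s \<and> s < a + e \<longrightarrow> poly g t * poly g s < 0)
     \<longleftrightarrow> odd (order a g)"
proof -
  define m where "m = order a g"
  obtain h where h: "g = [:-a,1:]^m * h" "\<not> [:-a,1:] dvd h"
    using order_decomp[OF assms] unfolding m_def by blast
  have ha: "poly h a \<noteq> 0" using h(2) by (simp add: poly_eq_0_iff_dvd)
  obtain d where d: "d > 0" "\<forall>y. \<bar>y - a\<bar> < d \<longrightarrow> poly h y * poly h a > 0"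
    using sign_near[OF ha] by blast
  have key: "poly g t * poly g s = ((t - a) * (s - a))^m * (poly h t * poly h s)" for t s
  proof -
    have "poly g t * poly g s = ((t - a)^m * poly h t) * ((s - a)^m * poly h s)"
      by (simp add: h(1))
    also have "\<dots> = ((t - a) * (s - a))^m * (poly h t * poly h s)"
      by (simp add: power_mult_distrib mult_ac)
    finally show ?thesis .
  qed
  have hpos: "poly h t * poly h s > 0" if "\<bar>t - a\<bar> < d" "\<bar>s - a\<bar> < d" for t s
  proof -
    have "(poly h t * poly h a) * (poly h s * poly h a) > 0" using d that by simp
    then have "(poly h t * poly h s) * (poly h a * poly h a) > 0" by (simp add: algebra_simps)
    then show ?thesis using ha by (simp add: zero_less_mult_iff)
  qed
  show ?thesis
  proof
    assume "\<exists>e>0. \<forall>t s. a - e < t \<and> t < a \<and> a < s \<and> s < a + e \<longrightarrow> poly g t * poly g s < 0"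
    then obtain e where e: "e > 0" "\<forall>t s. a - e < t \<and> t < a \<and> a < s \<and> s < a + e \<longrightarrow> poly g t * poly g s < 0"
      by blast
    define u where "u = min e d / 2"
    have u: "u > 0" "u < e" "u < d" using e d by (auto simp: u_def)
    have "poly g (a - u) * poly g (a + u) < 0" using e u by auto
    then have "((- u) * u)^m * (poly h (a - u) * poly h (a + u)) < 0" by (simp add: key)
    moreover have "poly h (a - u) * poly h (a + u) > 0" using hpos u by auto
    ultimately have "((- u) * u)^m < 0" by (metis linorder_not_le mult_nonneg_nonneg less_imp_le)
    then show "odd (order a g)" by (simp add: m_def)
  next
    assume o: "odd (order a g)"
    show "\<exists>e>0. \<forall>t s. a - e < t \<and> t < a \<and> a < s \<and> s < a + e \<longrightarrow> poly g t * poly g s < 0"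
    proof (intro exI[of _ d] conjI allI impI)
      fix t s assume ts: "a - d < t \<and> t < a \<and> a < s \<and> s < a + d"
      then have "(t - a) * (s - a) < 0" by (simp add: mult_less_0_iff)
      then have "((t - a) * (s - a))^m < 0" using o by (simp add: m_def)
      moreover have "poly h t * poly h s > 0" using hpos ts by auto
      ultimately show "poly g t * poly g s < 0" by (simp add: key mult_less_0_iff)
    qed (use d in auto)
  qed
qed

lemma mono1:
  fixes g :: "real poly"
  assumes "a \<le> b" "\<And>y. a < y \<Longrightarrow> y < b \<Longrightarrow> poly (pderiv g) y \<ge> 0"
  shows "poly g a \<le> poly g b"
proof (cases "a = b")
  case False
  then have "a < b" using assms by auto
  from poly_MVT[OF this, of g] obtain x where "a < x" "x < b" "poly g b - poly g a = (b - a) * poly (pderiv g) x"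
    by auto
  moreover have "poly (pderiv g) x \<ge> 0" using assms calculation by auto
  moreover have "(b - a) * poly (pderiv g) x \<ge> 0" using calculation \<open>a < b\<close> by simp
  ultimately show ?thesis by linarith
qed simp

lemma strict1:
  fixes g :: "real poly"
  assumes "degree g \<noteq> 0" "a < b" "\<And>y. a < y \<Longrightarrow> y < b \<Longrightarrow> poly (pderiv g) y \<ge> 0"
  shows "poly g a < poly g b"
proof -
  have le: "poly g a \<le> poly g b" using mono1[of a b g] assms by auto
  show ?thesis
  proof (rule ccontr)
    assume "\<not> poly g a < poly g b"
    then have eq: "poly g a = poly g b" using le by auto
    have "{a..b} \<subseteq> {y. poly (g - [:poly g a:]) y = 0}"
    proof
      fix y assume "y \<in> {a..b}"
      then have "poly g a \<le> poly g y" "poly g y \<le> poly g b"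
        using mono1[of a y g] mono1[of y b g] assms by auto
      then show "y \<in> {y. poly (g - [:poly g a:]) y = 0}" using eq by simp
    qed
    moreover have "g - [:poly g a:] \<noteq> 0" using assms(1) by (metis degree_pCons_0 eq_iff_diff_eq_0)
    ultimately have "finite {a..b}" using poly_roots_finite finite_subset by blast
    then show False using infinite_Icc[OF assms(2)] by blast
  qed
qed

lemma interval_roots_inc:
  fixes g :: "real \<Rightarrow> real" and lo hi :: ereal
  assumes I_def: "I = {x. lo < ereal x \<and> ereal x < hi}"
    and lohi: "lo < hi"
    and cont: "continuous_on UNIV g"
    and inc: "\<forall>a\<in>I. \<forall>b\<in>I. a < b \<longrightarrow> g a < g b"
    and lower: "(\<exists>l. lo = ereal l \<and> vL = g l \<and> (\<forall>x\<in>I. g l < g x)) \<or> (vL < 0 \<and> (\<exists>x\<in>I. g x < 0))"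
    and upper: "(\<exists>u. hi = ereal u \<and> vU = g u \<and> (\<forall>x\<in>I. g x < g u)) \<or> (vU > 0 \<and> (\<exists>x\<in>I. g x > 0))"
  shows "vL * vU \<ge> 0 \<longrightarrow> (\<forall>x\<in>I. g x \<noteq> 0)"
    and "vL * vU < 0 \<longrightarrow> (\<exists>!x. x \<in> I \<and> g x = 0)"
proof -
  obtain x0 where x0: "x0 \<in> I" using ereal_dense2[OF lohi] I_def by auto
  have sgn: "vL < 0 \<and> vU > 0" if "x \<in> I" "g x = 0" for x
  proof -
    have "vL < 0" using lower that by auto
    moreover have "vU > 0" using upper that by auto
    ultimately show ?thesis by simp
  qed
  show "vL * vU \<ge> 0 \<longrightarrow> (\<forall>x\<in>I. g x \<noteq> 0)"
  proof (intro impI ballI notI)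
    fix x assume "0 \<le> vL * vU" "x \<in> I" "g x = 0"
    then show False using sgn[of x] by (simp add: mult_less_0_iff) (meson mult_neg_pos not_le)
  qed
  show "vL * vU < 0 \<longrightarrow> (\<exists>!x. x \<in> I \<and> g x = 0)"
  proof
    assume neg: "vL * vU < 0"
    have vL: "vL < 0"
    proof (rule ccontr)
      assume "\<not> vL < 0"
      then have "vL > 0" using neg by (cases "vL = 0") auto
      then have "vU < 0" using neg by (simp add: mult_less_0_iff)
      then obtain u where u: "vU = g u" "\<forall>x\<in>I. g x < g u" using upper by auto
      obtain l where l: "vL = g l" "\<forall>x\<in>I. g l < g x" using lower \<open>vL > 0\<close> by auto
      show False using u l x0 \<open>vL > 0\<close> \<open>vU < 0\<close> by force
    qed
    then have vU: "vU > 0" using neg by (simp add: mult_less_0_iff)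
    obtain a where a: "g a < 0" "lo \<le> ereal a" "a \<in> I \<or> lo = ereal a"
      using lower vL by (auto simp: I_def)
    obtain b where b: "g b > 0" "ereal b \<le> hi" "b \<in> I \<or> hi = ereal b"
      using upper vU by (auto simp: I_def)
    have ab: "a < b"
    proof -
      { assume "a \<in> I" "b \<in> I"
        then have ?thesis using inc a(1) b(1)
          by (metis linorder_neqE_linordered_idom less_trans less_irrefl) }
      moreover { assume "lo = ereal a" "b \<in> I" then have ?thesis by (auto simp: I_def) }
      moreover { assume "a \<in> I" "hi = ereal b" then have ?thesis by (auto simp: I_def) }
      moreover { assume "lo = ereal a" "hi = ereal b" then have ?thesis using lohi by auto }
      ultimately show ?thesis using a(3) b(3) by blast
    qed
    obtain x where x: "a \<le> x" "x \<le> b" "g x = 0"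
      using IVT'[of g a 0 b] a b ab continuous_on_subset[OF cont] by auto
    have "x \<noteq> a" "x \<noteq> b" using x a b by auto
    then have "a < x" "x < b" using x by auto
    then have xI: "x \<in> I" unfolding I_def using a(2) b(2)
    proof -
      have "ereal a < ereal x" "ereal x < ereal b" using \<open>a < x\<close> \<open>x < b\<close> by simp_all
      then have "lo < ereal x" "ereal x < hi"
        using le_less_trans[OF a(2)] less_le_trans[OF _ b(2)] by blast+
      then show "x \<in> {x. lo < ereal x \<and> ereal x < hi}" by simp
    qed
    show "\<exists>!x. x \<in> I \<and> g x = 0"
    proof (rule ex1I[of _ x])
      show "x \<in> I \<and> g x = 0" using xI x by auto
      fix y assume y: "y \<in> I \<and> g y = 0"
      show "y = x"
      proof (rule ccontr)
        assume "y \<noteq> x"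
        then consider "y < x" | "x < y" by linarith
        then show False using inc xI y x by (cases) force+
      qed
    qed
  qed
qed

lemma interval_count:
  fixes xs :: "real list"
  assumes ss: "sorted_wrt (<) xs" and len: "length xs = k" and i: "1 \<le> i" "i \<le> k + 1"
    and lo: "i \<le> k \<Longrightarrow> xs!(k-i) < x" and hi: "2 \<le> i \<Longrightarrow> x < xs!(k+1-i)"
  shows "x \<notin> set xs" and "card {c \<in> set xs. x < c} = i - 1"
proof -
  have srt: "sorted xs" and dst: "distinct xs" using ss by (auto simp: strict_sorted_iff)
  have below: "xs!j < x" if "j < k" "j + i \<le> k" for j
  proof -
    have "xs!j \<le> xs!(k-i)" using sorted_nth_mono[OF srt, of j "k-i"] that len i by auto
    then show ?thesis using lo that by auto
  qed
  have above: "x < xs!j" if "j < k" "k + 1 \<le> j + i" for j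
  proof -
    have "xs!(k+1-i) \<le> xs!j" using sorted_nth_mono[OF srt, of "k+1-i" j] that len i by auto
    then show ?thesis using hi that by auto
  qed
  have setxs: "set xs = (\<lambda>j. xs!j) ` {..<k}" using len by (auto simp: set_conv_nth)
  show "x \<notin> set xs"
  proof
    assume "x \<in> set xs"
    then obtain j where "j < k" "xs!j = x" using setxs by auto
    then show False using below[of j] above[of j] by (cases "j + i \<le> k") auto
  qed
  have "{c \<in> set xs. x < c} = (\<lambda>j. xs!j) ` {k+1-i..<k}"
  proof (rule set_eqI, rule iffI)
    fix c assume "c \<in> {c \<in> set xs. x < c}"
    then obtain j where j: "j < k" "xs!j = c" "x < c" using setxs by auto
    then have "k + 1 \<le> j + i" using below[of j] by (cases "j + i \<le> k") auto
    then show "c \<in> (\<lambda>j. xs!j) ` {k+1-i..<k}" using j by auto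
  next
    fix c assume "c \<in> (\<lambda>j. xs!j) ` {k+1-i..<k}"
    then obtain j where j: "k+1-i \<le> j" "j < k" "c = xs!j" by auto
    then show "c \<in> {c \<in> set xs. x < c}" using above[of j] len i by auto
  qed
  moreover have "inj_on (\<lambda>j. xs!j) {k+1-i..<k}"
    using inj_on_nth[OF dst, of "{k+1-i..<k}"] len by auto
  ultimately show "card {c \<in> set xs. x < c} = i - 1"
    using i by (simp add: card_image)
qed

lemma nbhd:
  fixes lo hi :: ereal
  assumes "lo < ereal a" "ereal a < hi"
  shows "\<exists>e>0. \<forall>y. \<bar>y - a\<bar> < e \<longrightarrow> lo < ereal y \<and> ereal y < hi"
proof -
  obtain e1 where e1: "e1 > 0" "\<forall>y. \<bar>y - a\<bar> < e1 \<longrightarrow> lo < ereal y"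
  proof (cases lo)
    case (real l)
    then show ?thesis using assms by (intro that[of "a - l"]) auto
  next
    case MInf then show ?thesis using that[of 1] by auto
  next
    case PInf then show ?thesis using assms by auto
  qed
  obtain e2 where e2: "e2 > 0" "\<forall>y. \<bar>y - a\<bar> < e2 \<longrightarrow> ereal y < hi"
  proof (cases hi)
    case (real u)
    then show ?thesis using assms by (intro that[of "u - a"]) auto
  next
    case PInf then show ?thesis using that[of 1] by auto
  next
    case MInf then show ?thesis using assms by auto
  qed
  show ?thesis using e1 e2 by (intro exI[of _ "min e1 e2"]) auto
qed

lemma locmin:
  fixes g :: "real poly" and lo hi :: ereal
  assumes "lo < ereal a" "ereal a < hi"
    and L: "\<And>y. lo < ereal y \<Longrightarrow> y < a \<Longrightarrow> poly (pderiv g) y \<le> 0"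
    and R: "\<And>y. a < y \<Longrightarrow> ereal y < hi \<Longrightarrow> poly (pderiv g) y \<ge> 0"
  shows "\<exists>e>0. \<forall>y. \<bar>y - a\<bar> < e \<longrightarrow> poly g a \<le> poly g y"
proof -
  obtain e where e: "e > 0" "\<forall>y. \<bar>y - a\<bar> < e \<longrightarrow> lo < ereal y \<and> ereal y < hi"
    using nbhd[OF assms(1,2)] by blast
  show ?thesis
  proof (intro exI[of _ e] conjI allI impI)
    fix y assume y: "\<bar>y - a\<bar> < e"
    consider "y < a" | "y = a" | "a < y" by linarith
    then show "poly g a \<le> poly g y"
    proof cases
      case 1
      have "poly (-g) y \<le> poly (-g) a"
      proof (rule mono1)
        fix z assume z: "y < z" "z < a"
        have "\<bar>z - a\<bar> < e" using y z by auto
        then have "lo < ereal z" using e by auto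
        then show "poly (pderiv (-g)) z \<ge> 0" using L z by (simp add: pderiv_minus)
      qed (use 1 in auto)
      then show ?thesis by simp
    next
      case 3
      show ?thesis
      proof (rule mono1)
        fix z assume z: "a < z" "z < y"
        have "\<bar>z - a\<bar> < e" using y z by auto
        then have "ereal z < hi" using e by auto
        then show "poly (pderiv g) z \<ge> 0" using R z by simp
      qed (use 3 in auto)
    qed simp
  qed (use e in auto)
qed

lemma pinf:
  fixes f :: "real poly"
  assumes "lead_coeff f > 0"
  shows "\<exists>n. \<forall>x\<ge>n. poly f x > 0"
  using poly_pinfty_gt_lc[OF assms] assms by (meson less_le_trans)

lemma minf:
  fixes f :: "real poly"
  assumes "lead_coeff f > 0"
  shows "\<exists>n. \<forall>x\<le>n. (-1)^degree f * poly f x > 0"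
proof -
  define g where "g = smult ((-1)^degree f) (pcompose f [:0,-1:])"
  have "lead_coeff (pcompose f [:0,-1:]) = lead_coeff f * (-1)^degree f"
    by (subst lead_coeff_comp) auto
  then have "lead_coeff g = lead_coeff f"
    by (simp add: g_def degree_pcompose power_mult_distrib[symmetric])
  then obtain n where n: "\<forall>y\<ge>n. poly g y > 0" using pinf assms by metis
  show ?thesis
  proof (intro exI[of _ "-n"] allI impI)
    fix x :: real assume "x \<le> -n"
    then have "poly g (-x) > 0" using n by auto
    then show "(-1)^degree f * poly f x > 0" by (simp add: g_def poly_pcompose)
  qed
qed

theorem lemmaA2:
  fixes f :: "real poly" and K :: nat
  assumes deg: "degree f = K" and K1: "K > 1" and lc: "lead_coeff f > 0"
    and real_crit: "\<forall>z::complex. poly (map_poly of_real (pderiv f)) z = 0 \<longrightarrow> z \<in> \<real>"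
  defines "k \<equiv> card (crit_pts f)"
  shows "(k > 0 \<longrightarrow> (\<forall>i\<in>{1..k}.
            (odd i \<longrightarrow> local_min f (real_of_ereal (alpha f i))) \<and>
            (even i \<longrightarrow> local_max f (real_of_ereal (alpha f i)))))
    \<and> odd (k + K)
    \<and> (\<forall>i\<in>{1..k+1}. mono_on (alpha_int f i) (poly f) \<or> antimono_on (alpha_int f i) (poly f))
    \<and> (\<forall>i\<in>{1..k+1}.
         (falpha f i * falpha f (i - 1) \<ge> 0 \<longrightarrow> (\<forall>x\<in>alpha_int f i. poly f x \<noteq> 0)) \<and>
         (falpha f i * falpha f (i - 1) < 0 \<longrightarrow>
            (\<exists>!x. x \<in> alpha_int f i \<and> poly f x = 0) \<and>
            (\<forall>x\<in>alpha_int f i. poly f x = 0 \<longrightarrow> order x f = 1 \<or> inflection_point f x)))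
    \<and> ((\<forall>\<beta>. poly (pderiv f) \<beta> = 0 \<and> order \<beta> (pderiv f) > 1 \<longrightarrow> poly f \<beta> = 0) \<longrightarrow>
         (\<forall>i\<in>{1..k+1}. falpha f i * falpha f (i - 1) \<ge> 0 \<longrightarrow>
            (\<forall>x\<in>alpha_int f i. poly (pderiv f) x \<noteq> 0)))
    \<and> ((\<forall>z::complex. poly (map_poly of_real f) z = 0 \<longrightarrow> z \<in> \<real>) \<longleftrightarrow>
         S_sum f MInfty PInfty = 1)"
proof -
  define p where "p = pderiv f"
  define C where "C = crit_pts f"
  have f0: "f \<noteq> 0" using deg K1 by auto
  have degp: "degree p = K - 1" using deg by (simp add: p_def degree_pderiv)
  have p0: "p \<noteq> 0" using degp K1 deg by (auto simp: p_def pderiv_eq_0_iff)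
  have pp0: "pderiv p \<noteq> 0" using degp K1 by (auto simp: pderiv_eq_0_iff)
  define M where "M = proots p"
  obtain q where q: "p = (\<Prod>x\<in>#M. [:-x,1:]) * q" "\<forall>x. poly q x \<noteq> 0"
    using decomp[OF p0] M_def by blast
  have "degree q = 0" using allreal_iff[OF q] real_crit p_def by auto
  then obtain c where c: "q = [:c:]" by (auto elim: degree_eq_zeroE)
  have c0: "c \<noteq> 0" using q(2) c by auto
  have sizeM: "size M = K - 1"
  proof -
    have "degree p = degree (\<Prod>x\<in>#M. [:-x,1:]) + degree q"
      using q(1) p0 by (metis degree_mult_eq mult_eq_0_iff)
    then show ?thesis using degp c degree_prod_linear[of M] by simp
  qed
  have "lead_coeff p = c"
    using q(1) c by (simp only: lead_coeff_mult lc_prod_linear) simp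
  moreover have "lead_coeff p = of_nat K * lead_coeff f"
    using degp deg K1 by (simp add: p_def coeff_pderiv)
  ultimately have cpos: "c > 0" using lc K1 by (auto simp: zero_less_mult_iff)
  have polyp: "poly p x = (\<Prod>r\<in>#M. (x - r)) * c" for x
    using q(1) c by (simp only: poly_mult poly_prod_mset) simp
  have countM: "count M r = order r p" for r using p0 by (simp add: M_def)
  have crit: "C = {x. odd (order x p)}"
  proof -
    have "x \<in> C \<longleftrightarrow> odd (order x p)" for x
    proof (cases "poly p x = 0")
      case True
      have "inflection_point f x \<longleftrightarrow> odd (order x (pderiv p))"
        unfolding inflection_point_def p_def[symmetric] using local_sign[OF pp0] by blast
      moreover have "order x p = Suc (order x (pderiv p))" using order_pderiv[OF p0 True] .
      ultimately show ?thesis using True by (simp add: C_def crit_pts_def p_def[symmetric])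
    next
      case False
      then show ?thesis by (simp add: C_def crit_pts_def p_def[symmetric] order_0I)
    qed
    then show ?thesis by auto
  qed
  have Csub: "C \<subseteq> set_mset M"
  proof
    fix x assume "x \<in> C"
    then have "odd (order x p)" using crit by simp
    then have "count M x \<noteq> 0" using countM by (metis even_zero)
    then show "x \<in># M" by (metis count_eq_zero_iff)
  qed
  have finC: "finite C" using Csub finite_set_mset finite_subset by blast
  have SGN: "poly p x > 0 \<longleftrightarrow> even (card {c\<in>C. x < c})" if "poly p x \<noteq> 0" for x
  proof -
    have xM: "x \<notin># M" using that countM by (metis count_eq_zero_iff order_0I)
    have "poly p x > 0 \<longleftrightarrow> (\<Prod>r\<in>#M. (x - r)) > 0" using polyp cpos by (simp add: zero_less_mult_iff)
    also have "\<dots> \<longleftrightarrow> even (card {r. x < r \<and> odd (count M r)})"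
      using sign_prod(1)[OF xM] parity_filter[of x M] by simp
    also have "{r. x < r \<and> odd (count M r)} = {c\<in>C. x < c}" using crit countM by auto
    finally show ?thesis .
  qed
  have par: "odd (k + K)"
  proof -
    define x0 where "x0 = Min (insert 0 (set_mset M)) - 1"
    have lt: "x0 < r" if "r \<in># M" for r
    proof -
      have "Min (insert 0 (set_mset M)) \<le> r" using that by simp
      then show ?thesis by (simp add: x0_def)
    qed
    have "filter_mset (\<lambda>r. x0 < r) M = M" using lt by (simp add: filter_mset_eq_conv)
    moreover have "{r. x0 < r \<and> odd (count M r)} = C" using crit countM lt Csub by auto
    moreover have "x0 \<notin># M" using lt by auto
    ultimately have "even (K - 1) \<longleftrightarrow> even k"
      using parity_filter[of x0 M] sizeM by (simp add: k_def C_def)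
    then show ?thesis using K1 by (cases K) auto
  qed
  define xs where "xs = sorted_list_of_set C"
  have ss: "sorted_wrt (<) xs" by (simp add: xs_def strict_sorted_list_of_set)
  have len: "length xs = k" by (simp add: xs_def k_def C_def)
  have setxs: "set xs = C" using finC by (simp add: xs_def)
  have AL: "alpha f i = (if i = 0 then PInfty else if i \<le> k then ereal (xs!(k-i)) else MInfty)" for i
    by (simp add: alpha_def k_def C_def xs_def)
  have FA: "falpha f i = (if i = 0 then 1 else if i \<le> k then poly f (xs!(k-i)) else (-1)^K)" for i
    by (simp add: falpha_def AL deg k_def C_def)
  have inI: "x \<notin> C \<and> card {c\<in>C. x < c} = i - 1"
    if i: "1 \<le> i" "i \<le> k + 1" and x: "x \<in> alpha_int f i" for i x
  proof -
    have lo: "xs!(k-i) < x" if "i \<le> k"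
      using x that i by (simp add: alpha_int_def AL)
    have hi: "x < xs!(k+1-i)" if "2 \<le> i"
    proof -
      have h: "i - 1 \<noteq> 0" "i - 1 \<le> k" "k - (i - 1) = k + 1 - i" using that i by auto
      have "alpha f (i - 1) = ereal (xs!(k+1-i))"
        by (subst AL) (simp only: h if_False if_True)
      then show ?thesis using x by (simp add: alpha_int_def)
    qed
    show ?thesis using interval_count[OF ss len i lo hi] setxs by simp
  qed
  define sg where "sg i = (if odd i then 1 else -1 :: real)" for i :: nat
  have sg2: "sg i * sg i = 1" for i by (simp add: sg_def)
  have SGI: "sg i * poly p x \<ge> 0" if i: "1 \<le> i" "i \<le> k + 1" and x: "x \<in> alpha_int f i" for i x
  proof (cases "poly p x = 0")
    case False
    have "poly p x > 0 \<longleftrightarrow> even (i - 1)" using SGN[OF False] inI[OF i x] by simp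
    then show ?thesis using i False by (cases "odd i") (auto simp: sg_def)
  qed simp
  have conv: "y \<in> alpha_int f i" if "a \<in> alpha_int f i" "b \<in> alpha_int f i" "a \<le> y" "y \<le> b" for a b y i
  proof -
    have h: "ereal a \<le> ereal y" "ereal y \<le> ereal b" using that by auto
    have "alpha f i < ereal a" "ereal b < alpha f (i - 1)" using that(1,2) by (auto simp: alpha_int_def)
    then have "alpha f i < ereal y" "ereal y < alpha f (i - 1)"
      using less_le_trans[OF _ h(1)] le_less_trans[OF h(2)] by blast+
    then show ?thesis by (simp add: alpha_int_def)
  qed
  have degsf: "degree (smult (sg i) f) \<noteq> 0" for i using deg K1 by (simp add: sg_def)
  have STR: "sg i * poly f a < sg i * poly f b"
    if i: "1 \<le> i" "i \<le> k + 1" and ab: "a < b" and btw: "\<forall>y. a < y \<and> y < b \<longrightarrow> y \<in> alpha_int f i" for i a b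
  proof -
    have "poly (smult (sg i) f) a < poly (smult (sg i) f) b"
    proof (rule strict1[OF degsf ab])
      fix y assume "a < y" "y < b"
      then show "poly (pderiv (smult (sg i) f)) y \<ge> 0"
        using SGI[OF i] btw by (simp add: pderiv_smult p_def)
    qed
    then show ?thesis by simp
  qed
  have STRI: "sg i * poly f a < sg i * poly f b"
    if i: "1 \<le> i" "i \<le> k + 1" and ab: "a < b" "a \<in> alpha_int f i" "b \<in> alpha_int f i" for i a b
    using STR[OF i ab(1)] conv[OF ab(2,3)] by auto
  have part3: "\<forall>i\<in>{1..k+1}. mono_on (alpha_int f i) (poly f) \<or> antimono_on (alpha_int f i) (poly f)"
  proof
    fix i assume "i \<in> {1..k+1}"
    then have i: "1 \<le> i" "i \<le> k + 1" by auto
    show "mono_on (alpha_int f i) (poly f) \<or> antimono_on (alpha_int f i) (poly f)"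
    proof (cases "odd i")
      case True
      have "mono_on (alpha_int f i) (poly f)"
      proof (rule mono_onI)
        fix r s assume "r \<in> alpha_int f i" "s \<in> alpha_int f i" "r \<le> s"
        then show "poly f r \<le> poly f s" using STRI[OF i, of r s] True
          by (cases "r = s") (auto simp: sg_def)
      qed
      then show ?thesis ..
    next
      case False
      have "antimono_on (alpha_int f i) (poly f)"
      proof (rule monotone_onI)
        fix r s assume "r \<in> alpha_int f i" "s \<in> alpha_int f i" "r \<le> s"
        then show "poly f s \<le> poly f r" using STRI[OF i, of r s] False
          by (cases "r = s") (auto simp: sg_def)
      qed
      then show ?thesis ..
    qed
  qed
  have ALD: "alpha f i < alpha f (i - 1)" if i1: "1 \<le> i" "i \<le> k + 1" for i
  proof -
    consider "i = 1" | "2 \<le> i" "i \<le> k" | "2 \<le> i" "i = k + 1"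
      using i1 by (cases "i = 1"; cases "i \<le> k") auto
    then show ?thesis
    proof cases
      case 1 then show ?thesis by (simp add: AL)
    next
      case 2
      have "xs!(k-i) < xs!(k-(i-1))" using sorted_wrt_nth_less[OF ss, of "k-i" "k-(i-1)"] 2 len by auto
      then show ?thesis using 2 by (simp add: AL)
    next
      case 3 then show ?thesis by (simp add: AL)
    qed
  qed
  have part1: "\<forall>i\<in>{1..k}. (odd i \<longrightarrow> local_min f (real_of_ereal (alpha f i))) \<and>
            (even i \<longrightarrow> local_max f (real_of_ereal (alpha f i)))"
  proof
    fix i assume "i \<in> {1..k}"
    then have i: "1 \<le> i" "i \<le> k" by auto
    define a where "a = xs!(k-i)"
    have ai: "alpha f i = ereal a" using i by (simp add: AL a_def)
    have lo: "alpha f (i+1) < ereal a" using ALD[of "i+1"] i ai by simp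
    have hi: "ereal a < alpha f (i-1)" using ALD[of i] i ai by simp
    obtain e where e: "e > 0" "\<forall>y. \<bar>y - a\<bar> < e \<longrightarrow> poly (smult (sg i) f) a \<le> poly (smult (sg i) f) y"
    proof -
      have "\<exists>e>0. \<forall>y. \<bar>y - a\<bar> < e \<longrightarrow> poly (smult (sg i) f) a \<le> poly (smult (sg i) f) y"
      proof (rule locmin[OF lo hi])
        fix y assume y: "alpha f (i+1) < ereal y" "y < a"
        then have "y \<in> alpha_int f (i+1)" using ai by (simp add: alpha_int_def)
        then have "sg (i+1) * poly p y \<ge> 0" using SGI[of "i+1" y] i by simp
        then show "poly (pderiv (smult (sg i) f)) y \<le> 0"
          by (simp add: pderiv_smult p_def[symmetric] sg_def split: if_splits)
      next
        fix y assume y: "a < y" "ereal y < alpha f (i-1)"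
        then have "y \<in> alpha_int f i" using ai by (simp add: alpha_int_def)
        then have "sg i * poly p y \<ge> 0" using SGI[of i y] i by simp
        then show "poly (pderiv (smult (sg i) f)) y \<ge> 0"
          by (simp add: pderiv_smult p_def[symmetric])
      qed
      then show ?thesis using that by blast
    qed
    have ra: "real_of_ereal (alpha f i) = a" using ai by simp
    show "(odd i \<longrightarrow> local_min f (real_of_ereal (alpha f i))) \<and>
            (even i \<longrightarrow> local_max f (real_of_ereal (alpha f i)))"
      unfolding ra local_min_def local_max_def using e by (auto simp: sg_def)
  qed
  have sgK: "sg (k+1) * (-1)^K = -1" using par by (auto simp: sg_def)
  have roots: "(falpha f i * falpha f (i - 1) \<ge> 0 \<longrightarrow> (\<forall>x\<in>alpha_int f i. poly f x \<noteq> 0)) \<and>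
         (falpha f i * falpha f (i - 1) < 0 \<longrightarrow> (\<exists>!x. x \<in> alpha_int f i \<and> poly f x = 0))"
    if i: "1 \<le> i" "i \<le> k + 1" for i
  proof -
    define g where "g x = sg i * poly f x" for x
    define vL where "vL = sg i * falpha f i"
    define vU where "vU = sg i * falpha f (i - 1)"
    have I_def: "alpha_int f i = {x. alpha f i < ereal x \<and> ereal x < alpha f (i - 1)}"
      by (simp add: alpha_int_def)
    have cont: "continuous_on UNIV g" unfolding g_def by (intro continuous_intros)
    have inc: "\<forall>a\<in>alpha_int f i. \<forall>b\<in>alpha_int f i. a < b \<longrightarrow> g a < g b"
      using STRI[OF i] by (auto simp: g_def)
    have lower: "(\<exists>l. alpha f i = ereal l \<and> vL = g l \<and> (\<forall>x\<in>alpha_int f i. g l < g x)) \<or> (vL < 0 \<and> (\<exists>x\<in>alpha_int f i. g x < 0))"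
    proof (cases "i \<le> k")
      case True
      define l where "l = xs!(k-i)"
      have al: "alpha f i = ereal l" using True i by (simp add: AL l_def)
      have "\<forall>x\<in>alpha_int f i. g l < g x"
      proof
        fix x assume x: "x \<in> alpha_int f i"
        have "\<forall>y. l < y \<and> y < x \<longrightarrow> y \<in> alpha_int f i"
        proof (intro allI impI)
          fix y assume y: "l < y \<and> y < x"
          then have "ereal y < ereal x" by simp
          moreover have "ereal x < alpha f (i - 1)" using x by (simp add: alpha_int_def)
          ultimately have "ereal y < alpha f (i - 1)" by (rule less_trans)
          then show "y \<in> alpha_int f i" using y al unfolding alpha_int_def by auto
        qed
        moreover have "l < x" using x al by (simp add: alpha_int_def)
        ultimately show "g l < g x" using STR[OF i, of l x] by (simp add: g_def)
      qed
      moreover have "vL = g l" using True i by (simp add: vL_def g_def FA l_def)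
      ultimately show ?thesis using al by blast
    next
      case False
      then have ik: "i = k + 1" using i by simp
      obtain n where n: "\<forall>x\<le>n. (-1)^K * poly f x > 0" using minf[OF lc] deg by blast
      define x where "x = min n (Min (insert 0 C) - 1)"
      have xC: "x < c" if "c \<in> C" for c
      proof -
        have "Min (insert 0 C) \<le> c" using that finC by simp
        then show ?thesis by (simp add: x_def)
      qed
      have "x \<in> alpha_int f i"
      proof (cases "k = 0")
        case True then show ?thesis using ik by (simp add: alpha_int_def AL)
      next
        case False
        have "xs!0 \<in> C" using setxs len False by (metis length_greater_0_conv neq0_conv nth_mem)
        then show ?thesis using ik False xC by (simp add: alpha_int_def AL)
      qed
      moreover have "g x < 0"
      proof -
        have "(-1)^K * poly f x > 0" using n by (simp add: x_def)
        moreover have "sg (k+1) = - ((-1)^K)" using sgK by (auto simp: sg_def split: if_splits)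
        ultimately show ?thesis by (simp add: g_def ik)
      qed
      moreover have "vL < 0" using sgK ik by (simp add: vL_def FA)
      ultimately show ?thesis by blast
    qed
    have upper: "(\<exists>u. alpha f (i - 1) = ereal u \<and> vU = g u \<and> (\<forall>x\<in>alpha_int f i. g x < g u)) \<or> (vU > 0 \<and> (\<exists>x\<in>alpha_int f i. g x > 0))"
    proof (cases "2 \<le> i")
      case True
      define u where "u = xs!(k-(i-1))"
      have au: "alpha f (i-1) = ereal u" using True i by (simp add: AL u_def)
      have "\<forall>x\<in>alpha_int f i. g x < g u"
      proof
        fix x assume x: "x \<in> alpha_int f i"
        have "\<forall>y. x < y \<and> y < u \<longrightarrow> y \<in> alpha_int f i"
        proof (intro allI impI)
          fix y assume y: "x < y \<and> y < u"
          then have "ereal x < ereal y" by simp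
          moreover have "alpha f i < ereal x" using x by (simp add: alpha_int_def)
          ultimately have "alpha f i < ereal y" by (metis less_trans)
          then show "y \<in> alpha_int f i" using y au unfolding alpha_int_def by auto
        qed
        moreover have "x < u" using x au by (simp add: alpha_int_def)
        ultimately show "g x < g u" using STR[OF i, of x u] by (simp add: g_def)
      qed
      moreover have "vU = g u" using True i by (simp add: vU_def g_def FA u_def)
      ultimately show ?thesis using au by blast
    next
      case False
      then have i1: "i = 1" using i by simp
      obtain n where n: "\<forall>x\<ge>n. poly f x > 0" using pinf[OF lc] by blast
      define x where "x = max n (Max (insert 0 C) + 1)"
      have xC: "c < x" if "c \<in> C" for c
      proof -
        have "c \<le> Max (insert 0 C)" using that finC by simp
        then show ?thesis by (simp add: x_def)
      qed
      have "x \<in> alpha_int f i"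
      proof (cases "k = 0")
        case True then show ?thesis using i1 by (simp add: alpha_int_def AL)
      next
        case False
        have "xs!(k-1) \<in> C" using setxs len False by (metis diff_less less_one neq0_conv nth_mem)
        then show ?thesis using i1 False xC by (simp add: alpha_int_def AL)
      qed
      moreover have "g x > 0" using n i1 by (simp add: g_def sg_def x_def)
      moreover have "vU > 0" using i1 by (simp add: vU_def FA sg_def)
      ultimately show ?thesis by blast
    qed
    have prod: "vL * vU = falpha f i * falpha f (i - 1)"
      using sg2[of i] by (simp add: vL_def vU_def algebra_simps)
    have gz: "g x = 0 \<longleftrightarrow> poly f x = 0" for x by (simp add: g_def sg_def)
    show ?thesis
      using interval_roots_inc[OF I_def ALD[OF i] cont inc lower upper] prod gz by simp
  qed
  have part4: "\<forall>i\<in>{1..k+1}.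
         (falpha f i * falpha f (i - 1) \<ge> 0 \<longrightarrow> (\<forall>x\<in>alpha_int f i. poly f x \<noteq> 0)) \<and>
         (falpha f i * falpha f (i - 1) < 0 \<longrightarrow>
            (\<exists>!x. x \<in> alpha_int f i \<and> poly f x = 0) \<and>
            (\<forall>x\<in>alpha_int f i. poly f x = 0 \<longrightarrow> order x f = 1 \<or> inflection_point f x))"
  proof
    fix i assume "i \<in> {1..k+1}"
    then have i: "1 \<le> i" "i \<le> k + 1" by auto
    have "order x f = 1 \<or> inflection_point f x" if x: "x \<in> alpha_int f i" "poly f x = 0" for x
    proof (cases "poly p x = 0")
      case True
      then have "x \<notin> C" using inI[OF i x(1)] by simp
      then show ?thesis using True by (simp add: C_def crit_pts_def p_def)
    next
      case False
      then show ?thesis using order_pderiv[OF f0 x(2)] by (simp add: p_def order_0I)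
    qed
    then show "(falpha f i * falpha f (i - 1) \<ge> 0 \<longrightarrow> (\<forall>x\<in>alpha_int f i. poly f x \<noteq> 0)) \<and>
         (falpha f i * falpha f (i - 1) < 0 \<longrightarrow>
            (\<exists>!x. x \<in> alpha_int f i \<and> poly f x = 0) \<and>
            (\<forall>x\<in>alpha_int f i. poly f x = 0 \<longrightarrow> order x f = 1 \<or> inflection_point f x))"
      using roots[OF i] by blast
  qed
  have part5: "(\<forall>\<beta>. poly (pderiv f) \<beta> = 0 \<and> order \<beta> (pderiv f) > 1 \<longrightarrow> poly f \<beta> = 0) \<longrightarrow>
         (\<forall>i\<in>{1..k+1}. falpha f i * falpha f (i - 1) \<ge> 0 \<longrightarrow>
            (\<forall>x\<in>alpha_int f i. poly (pderiv f) x \<noteq> 0))"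
  proof (intro impI ballI notI)
    fix i x
    assume H: "\<forall>\<beta>. poly (pderiv f) \<beta> = 0 \<and> order \<beta> (pderiv f) > 1 \<longrightarrow> poly f \<beta> = 0"
      and iin: "i \<in> {1..k+1}" and pr: "falpha f i * falpha f (i - 1) \<ge> 0"
      and x: "x \<in> alpha_int f i" and px: "poly (pderiv f) x = 0"
    then have i: "1 \<le> i" "i \<le> k + 1" by auto
    have "x \<notin> C" using inI[OF i x] by simp
    then have "even (order x p)" using crit by simp
    moreover have "order x p > 0" using px p0 by (simp add: p_def order_gt_0_iff)
    ultimately have "order x p > 1" by (cases "order x p = 1") auto
    then have "poly f x = 0" using H px by (simp add: p_def)
    then show False using roots[OF i] pr x by blast
  qed
  have part6: "(\<forall>z::complex. poly (map_poly of_real f) z = 0 \<longrightarrow> z \<in> \<real>) \<longleftrightarrow>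
         S_sum f MInfty PInfty = 1"
  proof -
    define Mf where "Mf = proots f"
    obtain qf where qf: "f = (\<Prod>x\<in>#Mf. [:-x,1:]) * qf" "\<forall>x. poly qf x \<noteq> 0"
      using decomp[OF f0] Mf_def by blast
    have degf: "K = size Mf + degree qf"
    proof -
      have "degree f = degree (\<Prod>x\<in>#Mf. [:-x,1:]) + degree qf"
        using qf(1) f0 by (metis degree_mult_eq mult_eq_0_iff)
      then show ?thesis using deg degree_prod_linear[of Mf] by simp
    qed
    define R where "R = {r. poly f r = 0 \<or> poly p r = 0}"
    have R: "{r. MInfty \<le> ereal r \<and> ereal r < PInfty \<and> (poly f r = 0 \<or> poly (pderiv f) r = 0)} = R"
      by (auto simp: R_def p_def)
    have finR: "finite R"
      using poly_roots_finite[OF f0] poly_roots_finite[OF p0] by (simp add: R_def Collect_disj_eq)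
    have s1: "(\<Sum>r\<in>R. order r f) = size Mf"
      using sum_count_superset[OF finR, of Mf] f0 by (auto simp: Mf_def R_def)
    have s2: "(\<Sum>r\<in>R. order r p) = size M"
      using sum_count_superset[OF finR, of M] p0 by (auto simp: M_def R_def)
    have "S_sum f MInfty PInfty = (\<Sum>r\<in>R. int (order r f) - int (order r p))"
      unfolding S_sum_def R by (simp add: p_def)
    also have "\<dots> = int (size Mf) - int (size M)"
      by (simp add: sum_subtractf s1[symmetric] s2[symmetric])
    finally have S: "S_sum f MInfty PInfty = int (size Mf) - int (K - 1)" using sizeM by simp
    have "(\<forall>z::complex. poly (map_poly of_real f) z = 0 \<longrightarrow> z \<in> \<real>) \<longleftrightarrow> degree qf = 0"
      using allreal_iff[OF qf] .
    also have "\<dots> \<longleftrightarrow> S_sum f MInfty PInfty = 1" using S degf K1 by auto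
    finally show ?thesis .
  qed
  have c1: "k > 0 \<longrightarrow> (\<forall>i\<in>{1..k}.
            (odd i \<longrightarrow> local_min f (real_of_ereal (alpha f i))) \<and>
            (even i \<longrightarrow> local_max f (real_of_ereal (alpha f i))))"
    using part1 by (intro impI)
  show ?thesis
    using c1 par part3 part4 part5 part6 by (intro conjI) assumption+
qed

end
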